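(* Let $h\in\mathbb{N}$, $b>0$ and $m>hb$. Suppose $\nu$ is a $b$-balanced product probability measure on $[m]^n$ and $\mathcal{F}_1,\dots,\mathcal{F}_h\subset[m]^n$ satisfy $\prod_{j=1}^h\nu(\mathcal{F}_j)>2^hb/(m-hb)$. Then $\mathcal{F}_1,\dots,\mathcal{F}_h$ cross contain an $h$-matching, i.e. there are $x^j\in\mathcal{F}_j$ ($j\in[h]$) such that for all distinct $j,j'\in[h]$ there is no $i\in[n]$ with $x^j_i=x^{j'}_i$.
   Context: A product measure $\nu=\prod_{i=1}^n\nu_i$ on $[m]^n$ is $b$-balanced if $\nu_i(x)\le b/m$ for all $i\in[n]$ and $x\in[m]$. *)

theory Defs
  imports Complex_Main "HOL-Library.FuncSet"
begin

definition cube :: "nat \<Rightarrow> nat \<Rightarrow> (nat \<Rightarrow> nat) set" where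
  "cube n m = PiE {1..n} (\<lambda>_. {1..m})"

text \<open>A product probability measure on [m]^n, given by its marginals nu i (i in [n]),
  each a probability distribution on [m].\<close>
definition product_prob :: "nat \<Rightarrow> nat \<Rightarrow> (nat \<Rightarrow> nat \<Rightarrow> real) \<Rightarrow> bool" where
  "product_prob n m nu \<longleftrightarrow>
     (\<forall>i\<in>{1..n}. (\<forall>x\<in>{1..m}. 0 \<le> nu i x) \<and> (\<Sum>x\<in>{1..m}. nu i x) = 1)"

definition prod_measure :: "nat \<Rightarrow> (nat \<Rightarrow> nat \<Rightarrow> real) \<Rightarrow> (nat \<Rightarrow> nat) set \<Rightarrow> real" where
  "prod_measure n nu F = (\<Sum>x\<in>F. \<Prod>i\<in>{1..n}. nu i (x i))"

definition balanced :: "nat \<Rightarrow> nat \<Rightarrow> (nat \<Rightarrow> nat \<Rightarrow> real) \<Rightarrow> real \<Rightarrow> bool" where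
  "balanced n m nu b \<longleftrightarrow> (\<forall>i\<in>{1..n}. \<forall>x\<in>{1..m}. nu i x \<le> b / real m)"

end

theory Submission
  imports Defs
begin

lemma suc_le_pow2: "Suc h \<le> 2^h"
  by (induction h) auto

lemma two_h_le_pow2: "2*h \<le> (2::nat)^h"
proof (cases h)
  case 0 then show ?thesis by simp
next
  case (Suc k)
  then show ?thesis using suc_le_pow2[of k] by simp
qed

lemma sq_le_pow2: "h*h \<le> (2::nat)^h + h"
proof (induction h)
  case 0 then show ?case by simp
next
  case (Suc h)
  have "Suc h * Suc h = h*h + 2*h + 1" by simp
  also have "\<dots> \<le> 2^h + h + 2*h + 1" using Suc.IH by simp
  also have "\<dots> \<le> 2^h + 2^h + Suc h" using two_h_le_pow2[of h] by simp
  finally show ?case by simp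
qed

lemma prod_lower:
  fixes d :: "nat \<Rightarrow> real"
  assumes "finite K" "y \<ge> 0" "\<forall>k\<in>K. d k \<ge> 0"
  shows "(\<Prod>k\<in>K. y + d k) \<ge> y^card K + y^(card K - 1) * (\<Sum>k\<in>K. d k)"
  using assms
proof (induction K rule: finite_induct)
  case empty then show ?case by simp
next
  case (insert x F)
  define c where "c = card F"
  define S where "S = (\<Sum>k\<in>F. d k)"
  have S0: "S \<ge> 0" unfolding S_def using insert.prems by (intro sum_nonneg) auto
  have IH: "(\<Prod>k\<in>F. y + d k) \<ge> y^c + y^(c - 1) * S"
    using insert by (simp add: c_def S_def)
  have P0: "(\<Prod>k\<in>F. y + d k) \<ge> y^c"
    using IH S0 insert.prems by (smt (verit) mult_nonneg_nonneg zero_le_power)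
  have dx: "d x \<ge> 0" using insert.prems by auto
  have "(\<Prod>k\<in>insert x F. y + d k) = (y + d x) * (\<Prod>k\<in>F. y + d k)"
    using insert by simp
  also have "\<dots> = y * (\<Prod>k\<in>F. y + d k) + d x * (\<Prod>k\<in>F. y + d k)"
    by (simp add: algebra_simps)
  also have "\<dots> \<ge> y * (y^c + y^(c - 1) * S) + d x * y^c"
    using IH P0 dx insert.prems by (intro add_mono mult_left_mono) auto
  finally have A: "(\<Prod>k\<in>insert x F. y + d k) \<ge> y * (y^c + y^(c - 1) * S) + d x * y^c" .
  have B: "y * (y^c + y^(c - 1) * S) + d x * y^c = y^Suc c + y^c * (d x + S)"
  proof (cases "c = 0")
    case True
    then have "F = {}" using insert.hyps c_def by simp
    then have "S = 0" by (simp add: S_def)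
    then show ?thesis using True by (simp add: algebra_simps)
  next
    case False
    then have "y * y^(c-1) = y^c" by (metis Suc_pred' neq0_conv power_Suc)
    then show ?thesis by (simp add: algebra_simps)
  qed
  show ?case using A B insert.hyps by (simp add: c_def S_def)
qed

lemma pow_diff_le:
  fixes a y :: real
  assumes "0 \<le> y" "y \<le> a"
  shows "a^n - y^n \<le> n * a^(n-1) * (a - y)"
proof -
  have "a^n - y^n = (a - y) * (\<Sum>i<n. y^(n - Suc i) * a^i)" by (rule power_diff_sumr2)
  also have "\<dots> \<le> (a - y) * (\<Sum>i<n. a^(n-1))"
  proof (intro mult_left_mono sum_mono)
    fix i assume "i \<in> {..<n}"
    then have "n - Suc i + i = n - 1" by auto
    have "y^(n - Suc i) * a^i \<le> a^(n - Suc i) * a^i"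
      using assms by (intro mult_right_mono power_mono) auto
    also have "\<dots> = a^(n-1)" using \<open>n - Suc i + i = n - 1\<close> by (metis power_add)
    finally show "y^(n - Suc i) * a^i \<le> a^(n-1)" .
  qed (use assms in auto)
  also have "\<dots> = n * a^(n-1) * (a - y)" by simp
  finally show ?thesis .
qed

lemma one_plus_pow_le3:
  assumes "h \<ge> 2"
  shows "(1 + 1 / (real h - 1))^(h-1) \<le> 3"
proof -
  have "(1 + 1 / (real h - 1))^(h-1) \<le> exp (1 / (real h - 1))^(h-1)"
    using assms by (intro power_mono exp_ge_add_one_self) auto
  also have "\<dots> = exp (real (h-1) * (1 / (real h - 1)))" by (rule exp_of_nat_mult[symmetric])
  also have "real (h-1) * (1 / (real h - 1)) = 1" using assms by (simp add: of_nat_diff)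
  finally show ?thesis using exp_le by simp
qed

lemma row_lemma:
  fixes v :: "nat \<Rightarrow> real" and h :: nat and \<beta> e :: real
  assumes h1: "h \<ge> 1" and bpos: "\<beta> > 0" and hb: "3*h*\<beta> \<le> 1"
    and vy: "\<forall>k\<in>{1..h}. v h \<le> v k \<and> v k \<le> 1" and y0: "0 \<le> v h"
    and eb: "e \<le> v h + \<beta> * (\<Sum>k\<in>{1..h}. v k - v h)"
    and eg: "e > 2^h * \<beta>"
  shows "e^h \<le> (\<Prod>k\<in>{1..h}. v k)"
proof -
  define y where "y = v h"
  define D where "D = (\<Sum>k\<in>{1..h}. v k - y)"
  have D0: "D \<ge> 0" unfolding D_def y_def using vy by (intro sum_nonneg) auto
  have hin: "h \<in> {1..h}" using h1 by auto
  have "D = (v h - y) + (\<Sum>k\<in>{1..h} - {h}. v k - y)"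
    unfolding D_def using sum.remove[of "{1..h}" h "\<lambda>k. v k - y"] hin by simp
  also have "\<dots> = (\<Sum>k\<in>{1..h} - {h}. v k - y)" by (simp add: y_def)
  also have "\<dots> \<le> (\<Sum>k\<in>{1..h} - {h}. 1)"
  proof (intro sum_mono)
    fix k assume "k \<in> {1..h} - {h}"
    then have "v k \<le> 1" using vy by auto
    then show "v k - y \<le> 1" using y0 by (simp add: y_def)
  qed
  also have "\<dots> = real h - 1" using hin h1 by (simp add: of_nat_diff)
  finally have Dle: "D \<le> real h - 1" .
  have e0: "e \<ge> 0" using eg bpos by (smt (verit) mult_pos_pos zero_less_power)
  have eyD: "e \<le> y + \<beta> * D" using eb by (simp add: y_def D_def)
  have "real (h*h) \<le> real (2^h + h)" using sq_le_pow2[of h] by (simp only: of_nat_le_iff)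
  then have sq: "real h * real h \<le> 2^h + real h" by simp
  have "y > (2^h - (real h - 1)) * \<beta>"
  proof -
    have "\<beta> * D \<le> \<beta> * (real h - 1)" using Dle bpos by simp
    then show ?thesis using eyD eg by (simp add: algebra_simps)
  qed
  moreover have "(2^h - (real h - 1)) * \<beta> \<ge> (real h - 1)^2 * \<beta>"
    using sq bpos by (intro mult_right_mono) (auto simp: power2_eq_square algebra_simps)
  ultimately have yb: "y > (real h - 1)^2 * \<beta>" by simp
  have yge0: "y \<ge> 0" using y0 by (simp add: y_def)
  have prodge: "(\<Prod>k\<in>{1..h}. v k) \<ge> y^h + y^(h-1) * D"
  proof -
    have "(\<Prod>k\<in>{1..h}. y + (v k - y)) \<ge> y^card {1..h} + y^(card {1..h} - 1) * (\<Sum>k\<in>{1..h}. v k - y)"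
      using vy yge0 by (intro prod_lower) (auto simp: y_def)
    then show ?thesis by (simp add: D_def)
  qed
  show ?thesis
  proof (cases "h = 1")
    case True
    then have "D = 0" by (simp add: D_def y_def)
    then show ?thesis using True eyD by (simp add: y_def)
  next
    case False
    then have h2: "h \<ge> 2" using h1 by simp
    define a where "a = y + \<beta> * D"
    have ya: "y \<le> a" using D0 bpos by (simp add: a_def)
    have "e^h \<le> a^h" using e0 eyD by (intro power_mono) (auto simp: a_def)
    have diff: "a^h - y^h \<le> h * a^(h-1) * (a - y)" using yge0 ya by (rule pow_diff_le)
    have "(real h - 1) * a \<le> real h * y"
    proof -
      have "(real h - 1) * (\<beta> * D) \<le> (real h - 1) * (\<beta> * (real h - 1))"
        using Dle bpos h2 by (intro mult_left_mono) auto
      also have "\<dots> = (real h - 1)^2 * \<beta>" by (simp add: power2_eq_square)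
      also have "\<dots> \<le> y" using yb by simp
      finally show ?thesis by (simp add: a_def algebra_simps)
    qed
    then have "a \<le> y * (1 + 1 / (real h - 1))"
      using h2 by (simp add: field_simps)
    then have "a^(h-1) \<le> (y * (1 + 1 / (real h - 1)))^(h-1)"
      using yge0 ya by (intro power_mono) auto
    also have "\<dots> = y^(h-1) * (1 + 1 / (real h - 1))^(h-1)" by (simp add: power_mult_distrib)
    also have "\<dots> \<le> y^(h-1) * 3" using one_plus_pow_le3[OF h2] yge0 by (intro mult_left_mono) auto
    finally have a3: "a^(h-1) \<le> 3 * y^(h-1)" by simp
    have "h * a^(h-1) * (a - y) = (h * \<beta>) * a^(h-1) * D" by (simp add: a_def)
    also have "\<dots> \<le> (h * \<beta>) * (3 * y^(h-1)) * D"
      using a3 D0 bpos by (intro mult_right_mono mult_left_mono) auto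
    also have "\<dots> = (3 * h * \<beta>) * (y^(h-1) * D)" by simp
    also have "\<dots> \<le> 1 * (y^(h-1) * D)"
      using hb D0 yge0 by (intro mult_right_mono) auto
    finally have "a^h \<le> y^h + y^(h-1) * D" using diff by simp
    then show ?thesis using \<open>e^h \<le> a^h\<close> prodge by simp
  qed
qed

lemma top_list:
  fixes g :: "nat \<Rightarrow> real" and A :: "nat set"
  assumes fin: "finite A" and hA: "h \<le> card A" and h1: "h \<ge> 1"
  shows "\<exists>t. (\<forall>k\<in>{1..h}. t k \<in> A) \<and> inj_on t {1..h}
           \<and> (\<forall>k\<in>{1..h}. \<forall>k'\<in>{1..h}. k \<le> k' \<longrightarrow> g (t k') \<le> g (t k))
           \<and> (\<forall>a\<in>A - t ` {1..h}. g a \<le> g (t h))"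
proof -
  define L where "L = sort_key (\<lambda>a. - g a) (sorted_list_of_set A)"
  have setL: "set L = A" using fin by (simp add: L_def)
  have distL: "distinct L" by (simp add: L_def)
  have lenL: "length L = card A" using fin by (simp add: L_def length_sort)
  have sortL: "sorted (map (\<lambda>a. - g a) L)" unfolding L_def by (rule sorted_sort_key)
  have mono: "g (L ! j) \<le> g (L ! i)" if "i \<le> j" "j < length L" for i j
  proof -
    have "(map (\<lambda>a. - g a) L) ! i \<le> (map (\<lambda>a. - g a) L) ! j"
      using sortL that by (intro sorted_nth_mono) auto
    then show ?thesis using that by simp
  qed
  define t where "t k = L ! (k - 1)" for k
  show ?thesis
  proof (intro exI conjI ballI impI)
    fix k assume "k \<in> {1..h}"
    then show "t k \<in> A" using hA lenL setL by (auto simp: t_def)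
  next
    show "inj_on t {1..h}"
    proof (rule inj_onI)
      fix k k' assume "k \<in> {1..h}" "k' \<in> {1..h}" "t k = t k'"
      then show "k = k'" using distL hA lenL by (auto simp: t_def nth_eq_iff_index_eq)
    qed
  next
    fix k k' assume "k \<in> {1..h}" "k' \<in> {1..h}" "k \<le> k'"
    then show "g (t k') \<le> g (t k)" using hA lenL by (auto simp: t_def intro!: mono)
  next
    fix a assume a: "a \<in> A - t ` {1..h}"
    then obtain i where i: "i < length L" "L ! i = a" using setL by (metis DiffD1 in_set_conv_nth)
    have "i \<ge> h"
    proof (rule ccontr)
      assume "\<not> h \<le> i"
      then have "t (Suc i) = a" "Suc i \<in> {1..h}" using i by (auto simp: t_def)
      then show False using a by auto
    qed
    then show "g a \<le> g (t h)" using i h1 by (auto simp: t_def intro!: mono[of "h-1" i, simplified])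
  qed
qed

lemma e_bound:
  fixes p f :: "nat \<Rightarrow> real" and T :: "nat \<Rightarrow> nat" and A :: "nat set"
  assumes fin: "finite A" and p: "\<forall>a\<in>A. 0 \<le> p a \<and> p a \<le> \<beta>" and psum: "(\<Sum>a\<in>A. p a) = 1"
    and TA: "T ` {1..h} \<subseteq> A" and inj: "inj_on T {1..h}"
    and mono: "\<forall>k\<in>{1..h}. f (T h) \<le> f (T k)"
    and rest: "\<forall>a\<in>A - T ` {1..h}. f a \<le> f (T h)"
  shows "(\<Sum>a\<in>A. p a * f a) \<le> f (T h) + \<beta> * (\<Sum>k\<in>{1..h}. f (T k) - f (T h))"
proof -
  define y where "y = f (T h)"
  define S where "S = T ` {1..h}"
  have finS: "finite S" by (simp add: S_def)
  have "(\<Sum>a\<in>A. p a * f a) = (\<Sum>a\<in>S. p a * f a) + (\<Sum>a\<in>A - S. p a * f a)"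
    using fin TA by (metis S_def sum.subset_diff add.commute)
  also have "(\<Sum>a\<in>A - S. p a * f a) \<le> (\<Sum>a\<in>A - S. p a * y)"
    using p rest by (intro sum_mono mult_left_mono) (auto simp: S_def y_def)
  also have "(\<Sum>a\<in>A - S. p a * y) = y * (1 - (\<Sum>a\<in>S. p a))"
  proof -
    have "(\<Sum>a\<in>A - S. p a) = (\<Sum>a\<in>A. p a) - (\<Sum>a\<in>S. p a)"
      using fin TA by (simp add: S_def sum_diff)
    moreover have "(\<Sum>a\<in>A - S. p a * y) = (\<Sum>a\<in>A - S. p a) * y" by (simp add: sum_distrib_right)
    ultimately show ?thesis using psum by (simp add: algebra_simps) (metis distrib_left mult.right_neutral)
  qed
  finally have "(\<Sum>a\<in>A. p a * f a) \<le> y + (\<Sum>a\<in>S. p a * (f a - y))"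
    by (simp add: algebra_simps sum_subtractf sum_distrib_left sum_distrib_right)
  also have "(\<Sum>a\<in>S. p a * (f a - y)) = (\<Sum>k\<in>{1..h}. p (T k) * (f (T k) - y))"
    unfolding S_def using inj by (simp add: sum.reindex)
  also have "\<dots> \<le> (\<Sum>k\<in>{1..h}. \<beta> * (f (T k) - y))"
  proof (intro sum_mono mult_right_mono)
    fix k assume k: "k \<in> {1..h}"
    then have "T k \<in> A" using TA by auto
    then show "p (T k) \<le> \<beta>" using p by auto
    show "0 \<le> f (T k) - y" using mono k by (auto simp: y_def)
  qed
  also have "\<dots> = \<beta> * (\<Sum>k\<in>{1..h}. f (T k) - y)" by (simp add: sum_distrib_left)
  finally show ?thesis by (simp add: y_def)
qed

lemma modinj:
  fixes c x y h :: nat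
  assumes "(c + x) mod h = (c + y) mod h" "x < h" "y < h"
  shows "x = y"
  using assms by (metis add_diff_cancel_left add_le_cancel_left linorder_linear
    mod_eq_dvd_iff_nat mod_nat_eqI)

definition rk :: "nat \<Rightarrow> nat \<Rightarrow> nat \<Rightarrow> nat" where
  "rk h s j = (j + s) mod h + 1"

lemma rk_range: "h \<ge> 1 \<Longrightarrow> rk h s j \<in> {1..h}"
  unfolding rk_def by (simp add: Suc_leI)

lemma rk_bij_s:
  assumes "h \<ge> 1"
  shows "bij_betw (\<lambda>s. rk h s j) {0..<h} {1..h}"
proof -
  have inj: "inj_on (\<lambda>s. rk h s j) {0..<h}"
  proof (rule inj_onI)
    fix s s' assume "s \<in> {0..<h}" "s' \<in> {0..<h}" "rk h s j = rk h s' j"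
    then show "s = s'" unfolding rk_def using modinj[of j s h s'] by auto
  qed
  have sub: "(\<lambda>s. rk h s j) ` {0..<h} \<subseteq> {1..h}" using rk_range[OF assms] by auto
  have "card ((\<lambda>s. rk h s j) ` {0..<h}) = card {1..h}" using card_image[OF inj] by simp
  then have "(\<lambda>s. rk h s j) ` {0..<h} = {1..h}" using sub by (intro card_subset_eq) auto
  then show ?thesis using inj by (simp add: bij_betw_def)
qed

lemma rk_inj_j:
  assumes "h \<ge> 1"
  shows "inj_on (rk h s) {1..h}"
proof (rule inj_onI)
  fix j j' assume j: "j \<in> {1..h}" "j' \<in> {1..h}" "rk h s j = rk h s j'"
  have e1: "Suc s + (j - 1) = j + s" "Suc s + (j' - 1) = j' + s" using j by auto
  have m: "(j + s) mod h = (j' + s) mod h" using j(3) by (simp add: rk_def)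
  have "(Suc s + (j - 1)) mod h = (Suc s + (j' - 1)) mod h" by (simp only: e1 m)
  moreover have "j - 1 < h" "j' - 1 < h" using j by auto
  ultimately have "j - 1 = j' - 1" by (rule modinj)
  then show "j = j'" using j by auto
qed

lemma prod_shift:
  fixes v :: "nat \<Rightarrow> nat \<Rightarrow> real"
  assumes "h \<ge> 1"
  shows "(\<Prod>j\<in>{1..h}. \<Prod>k\<in>{1..h}. v j k) = (\<Prod>s\<in>{0..<h}. \<Prod>j\<in>{1..h}. v j (rk h s j))"
proof -
  have "(\<Prod>s\<in>{0..<h}. \<Prod>j\<in>{1..h}. v j (rk h s j)) = (\<Prod>j\<in>{1..h}. \<Prod>s\<in>{0..<h}. v j (rk h s j))"
    by (rule prod.swap)
  also have "\<dots> = (\<Prod>j\<in>{1..h}. \<Prod>k\<in>{1..h}. v j k)"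
  proof (rule prod.cong[OF refl])
    fix j assume "j \<in> {1..h}"
    show "(\<Prod>s\<in>{0..<h}. v j (rk h s j)) = (\<Prod>k\<in>{1..h}. v j k)"
      using prod.reindex_bij_betw[OF rk_bij_s[OF assms, of j], of "v j"] by simp
  qed
  finally show ?thesis by simp
qed

lemma greedy:
  fixes T :: "nat \<Rightarrow> nat \<Rightarrow> nat" and r :: "nat \<Rightarrow> nat"
  assumes injT: "\<forall>j\<in>{1..h}. inj_on (T j) {1..h}" and injr: "inj_on r {1..h}"
    and rr: "r ` {1..h} \<subseteq> {1..h}"
  shows "\<exists>a. inj_on a {1..h} \<and> (\<forall>j\<in>{1..h}. a j \<in> T j ` {1..r j})"
proof -
  have rin: "r j \<in> {1..h}" if "j \<in> {1..h}" for j using rr that by blast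
  have rpos: "1 \<le> r j" if "j \<in> {1..h}" for j using rin[OF that] by simp
  have "\<exists>a. inj_on a {j\<in>{1..h}. r j \<le> q} \<and> (\<forall>j\<in>{1..h}. r j \<le> q \<longrightarrow> a j \<in> T j ` {1..r j})" for q
  proof (induction q)
    case 0
    have E: "{j\<in>{1..h}. r j \<le> 0} = {}" using rpos by fastforce
    show ?case
    proof (intro exI[of _ id] conjI)
      show "inj_on id {j\<in>{1..h}. r j \<le> 0}" by (simp only: E) simp
      show "\<forall>j\<in>{1..h}. r j \<le> 0 \<longrightarrow> id j \<in> T j ` {1..r j}" using E by blast
    qed
  next
    case (Suc q)
    then obtain a where ainj: "inj_on a {j\<in>{1..h}. r j \<le> q}"
      and aT: "\<forall>j\<in>{1..h}. r j \<le> q \<longrightarrow> a j \<in> T j ` {1..r j}" by blast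
    define J where "J = {j\<in>{1..h}. r j \<le> q}"
    show ?case
    proof (cases "\<exists>j0\<in>{1..h}. r j0 = Suc q")
      case False
      then have "{j\<in>{1..h}. r j \<le> Suc q} = J" by (auto simp: J_def le_Suc_eq)
      show ?thesis
      proof (intro exI[of _ a] conjI)
        show "inj_on a {j\<in>{1..h}. r j \<le> Suc q}" using ainj \<open>{j\<in>{1..h}. r j \<le> Suc q} = J\<close> by (simp add: J_def)
        show "\<forall>j\<in>{1..h}. r j \<le> Suc q \<longrightarrow> a j \<in> T j ` {1..r j}"
        proof (intro ballI impI)
          fix j assume j: "j \<in> {1..h}" "r j \<le> Suc q"
          then have "r j \<noteq> Suc q" using False by auto
          then have "r j \<le> q" using j by simp
          then show "a j \<in> T j ` {1..r j}" using aT j by simp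
        qed
      qed
    next
      case True
      then obtain j0 where j0: "j0 \<in> {1..h}" "r j0 = Suc q" by blast
      have cardJ: "card J \<le> q"
      proof -
        have "inj_on r J" using injr by (rule inj_on_subset) (auto simp: J_def)
        moreover have "r ` J \<subseteq> {1..q}" using rpos by (auto simp: J_def)
        ultimately show ?thesis using card_inj_on_le[of r J "{1..q}"] by simp
      qed
      define U where "U = a ` J"
      have finJ: "finite J" by (simp add: J_def)
      have "card U \<le> card J" unfolding U_def using finJ by (rule card_image_le)
      then have cardU: "card U \<le> q" using cardJ by simp
      define C where "C = T j0 ` {1..Suc q}"
      have "inj_on (T j0) {1..h}" using injT j0 by blast
      moreover have "{1..Suc q} \<subseteq> {1..h}" using j0 rin[of j0] by auto
      ultimately have "inj_on (T j0) {1..Suc q}" by (rule inj_on_subset)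
      then have cardC: "card C = Suc q" by (simp add: C_def card_image)
      have "C - U \<noteq> {}"
      proof
        assume "C - U = {}"
        then have "C \<subseteq> U" by auto
        then have "card C \<le> card U" by (intro card_mono) (auto simp: U_def J_def)
        then show False using cardC cardU by simp
      qed
      then obtain c where c: "c \<in> C" "c \<notin> U" by blast
      define a' where "a' = a(j0 := c)"
      have j0J: "j0 \<notin> J" using j0 by (auto simp: J_def)
      have newJ: "{j\<in>{1..h}. r j \<le> Suc q} = insert j0 J"
      proof
        show "{j\<in>{1..h}. r j \<le> Suc q} \<subseteq> insert j0 J"
        proof
          fix j assume j: "j \<in> {j\<in>{1..h}. r j \<le> Suc q}"
          show "j \<in> insert j0 J"
          proof (cases "r j = Suc q")
            case True
            then have "r j = r j0" using j0 by simp
            moreover have "j \<in> {1..h}" using j by simp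
            ultimately have "j = j0" using injr j0(1) by (meson inj_onD)
            then show ?thesis by simp
          next
            case False
            then show ?thesis using j by (auto simp: J_def)
          qed
        qed
        show "insert j0 J \<subseteq> {j\<in>{1..h}. r j \<le> Suc q}" using j0 by (auto simp: J_def)
      qed
      have "inj_on a' (insert j0 J)"
      proof -
        have eqa: "a' x = a x" if "x \<in> J" for x using j0J that by (auto simp: a'_def)
        have "inj_on a J" using ainj by (simp add: J_def)
        then have "inj_on a' J" using inj_on_cong[of J a' a] eqa by simp
        moreover have "a' j0 \<notin> a' ` (J - {j0})"
        proof -
          have "a' ` (J - {j0}) = U" using j0J by (auto simp: a'_def U_def)
          then show ?thesis using c by (simp add: a'_def)
        qed
        ultimately show ?thesis by (simp add: inj_on_insert)
      qed
      moreover have "\<forall>j\<in>{1..h}. r j \<le> Suc q \<longrightarrow> a' j \<in> T j ` {1..r j}"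
      proof (intro ballI impI)
        fix j assume j: "j \<in> {1..h}" "r j \<le> Suc q"
        show "a' j \<in> T j ` {1..r j}"
        proof (cases "j = j0")
          case True
          then show ?thesis using c j0 by (simp add: a'_def C_def)
        next
          case False
          then have "j \<in> J" using newJ j by auto
          then show ?thesis using aT False by (auto simp: a'_def J_def)
        qed
      qed
      ultimately show ?thesis unfolding newJ by blast
    qed
  qed
  from this[of h] obtain a where
    "inj_on a {j\<in>{1..h}. r j \<le> h}" "\<forall>j\<in>{1..h}. r j \<le> h \<longrightarrow> a j \<in> T j ` {1..r j}" by blast
  moreover have "{j\<in>{1..h}. r j \<le> h} = {1..h}" using rin by fastforce
  ultimately show ?thesis using rin by auto
qed

lemma prod_le_member:
  fixes e :: "nat \<Rightarrow> real"
  assumes "finite J" "j \<in> J" "\<forall>i\<in>J. 0 \<le> e i \<and> e i \<le> 1"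
  shows "(\<Prod>i\<in>J. e i) \<le> e j"
proof -
  have "(\<Prod>i\<in>J. e i) = e j * (\<Prod>i\<in>J - {j}. e i)"
    by (rule prod.remove[OF assms(1,2)])
  also have "\<dots> \<le> e j * 1"
    using assms by (intro mult_left_mono prod_le_1) auto
  finally show ?thesis by simp
qed

lemma one_dim:
  fixes h m :: nat and \<beta> \<epsilon> :: real and p :: "nat \<Rightarrow> real" and f :: "nat \<Rightarrow> nat \<Rightarrow> real"
  assumes h1: "h \<ge> 1" and bpos: "\<beta> > 0" and hbeta: "h*\<beta> < 1"
    and p: "\<forall>a\<in>{1..m}. 0 \<le> p a \<and> p a \<le> \<beta>" and psum: "(\<Sum>a\<in>{1..m}. p a) = 1"
    and f: "\<forall>j\<in>{1..h}. \<forall>a\<in>{1..m}. 0 \<le> f j a \<and> f j a \<le> 1"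
    and eps: "\<epsilon> = 2^h*\<beta>/(1-h*\<beta>)"
    and Pass: "(\<Prod>j\<in>{1..h}. \<Sum>a\<in>{1..m}. p a * f j a) > \<epsilon>"
  shows "\<exists>a. (\<forall>j\<in>{1..h}. a j \<in> {1..m}) \<and> inj_on a {1..h} \<and> (\<Prod>j\<in>{1..h}. f j (a j)) > \<epsilon>"
proof -
  define e where "e j = (\<Sum>a\<in>{1..m}. p a * f j a)" for j
  have e01: "0 \<le> e j \<and> e j \<le> 1" if j: "j \<in> {1..h}" for j
  proof
    show "0 \<le> e j" unfolding e_def using p f j by (intro sum_nonneg mult_nonneg_nonneg) auto
    have "e j \<le> (\<Sum>a\<in>{1..m}. p a)" unfolding e_def
    proof (intro sum_mono)
      fix a assume a: "a \<in> {1..m}"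
      then show "p a * f j a \<le> p a" using p f j by (intro mult_left_le) auto
    qed
    then show "e j \<le> 1" using psum by simp
  qed
  define P where "P = (\<Prod>j\<in>{1..h}. e j)"
  have Pgt: "P > \<epsilon>" using Pass by (simp add: P_def e_def)
  have Ple: "P \<le> 1" unfolding P_def using e01 by (intro prod_le_1) auto
  have den: "1 - h*\<beta> > 0" using hbeta by simp
  have pb: "2^h*\<beta> > 0" using bpos by simp
  have epsge: "\<epsilon> \<ge> 2^h*\<beta>"
  proof -
    have "2^h*\<beta>*(1-h*\<beta>) \<le> 2^h*\<beta>" using pb bpos by (intro mult_left_le) auto
    then show ?thesis unfolding eps using den by (simp add: pos_le_divide_eq)
  qed
  have epspos: "\<epsilon> > 0" using epsge pb by linarith
  have "2^h*\<beta>/(1-h*\<beta>) < 1" using Pgt Ple eps by simp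
  then have lt1: "2^h*\<beta> < 1 - h*\<beta>" using den by (simp add: pos_divide_less_eq)
  have "real (2*h) \<le> real (2^h)" using two_h_le_pow2[of h] by (simp only: of_nat_le_iff)
  then have "3*real h \<le> 2^h + real h" by simp
  then have "3*real h*\<beta> \<le> (2^h + real h)*\<beta>" using bpos by (intro mult_right_mono) auto
  then have hb3: "3*real h*\<beta> \<le> 1" using lt1 by (simp add: algebra_simps)
  have eg: "e j > 2^h*\<beta>" if j: "j \<in> {1..h}" for j
  proof -
    have "P \<le> e j" unfolding P_def using e01 j by (intro prod_le_member) auto
    then show ?thesis using Pgt epsge by simp
  qed
  have "1 \<le> real m * \<beta>"
  proof -
    have "1 = (\<Sum>a\<in>{1..m}. p a)" using psum by simp
    also have "\<dots> \<le> (\<Sum>a\<in>{1..m}. \<beta>)" using p by (intro sum_mono) auto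
    finally show ?thesis by simp
  qed
  moreover have "real h * \<beta> < 1" using hb3 h1 bpos by simp
  ultimately have "real h * \<beta> < real m * \<beta>" by simp
  then have hm: "h \<le> m" using bpos by simp
  have "\<forall>j\<in>{1..h}. \<exists>t. (\<forall>k\<in>{1..h}. t k \<in> {1..m}) \<and> inj_on t {1..h}
           \<and> (\<forall>k\<in>{1..h}. \<forall>k'\<in>{1..h}. k \<le> k' \<longrightarrow> f j (t k') \<le> f j (t k))
           \<and> (\<forall>a\<in>{1..m} - t ` {1..h}. f j a \<le> f j (t h))"
    using top_list[of "{1..m}" h] hm h1 by simp
  then obtain T where T: "\<forall>j\<in>{1..h}. (\<forall>k\<in>{1..h}. T j k \<in> {1..m}) \<and> inj_on (T j) {1..h}
           \<and> (\<forall>k\<in>{1..h}. \<forall>k'\<in>{1..h}. k \<le> k' \<longrightarrow> f j (T j k') \<le> f j (T j k))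
           \<and> (\<forall>a\<in>{1..m} - T j ` {1..h}. f j a \<le> f j (T j h))"
    by (rule bchoice[elim_format]) blast
  have Tm: "T j k \<in> {1..m}" if "j \<in> {1..h}" "k \<in> {1..h}" for j k using T that by blast
  have Tinj: "inj_on (T j) {1..h}" if "j \<in> {1..h}" for j using T that by blast
  have Tmono: "f j (T j k') \<le> f j (T j k)" if "j \<in> {1..h}" "k \<in> {1..h}" "k' \<in> {1..h}" "k \<le> k'" for j k k'
    using T that by blast
  define v where "v j k = f j (T j k)" for j k
  have hin: "h \<in> {1..h}" using h1 by simp
  have vge: "v j h \<le> v j k" if "j \<in> {1..h}" "k \<in> {1..h}" for j k
    using T that hin by (auto simp: v_def)
  have v01: "0 \<le> v j k \<and> v j k \<le> 1" if "j \<in> {1..h}" "k \<in> {1..h}" for j k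
  proof -
    have "T j k \<in> {1..m}" using T that by blast
    then show ?thesis using f that by (auto simp: v_def)
  qed
  have row: "e j ^ h \<le> (\<Prod>k\<in>{1..h}. v j k)" if j: "j \<in> {1..h}" for j
  proof (rule row_lemma[OF h1 bpos])
    show "real (3 * h) * \<beta> \<le> 1" using hb3 by simp
    show "\<forall>k\<in>{1..h}. v j h \<le> v j k \<and> v j k \<le> 1" using vge v01 j by auto
    show "0 \<le> v j h" using v01 j hin by auto
    show "2^h * \<beta> < e j" using eg j by auto
    have Tj: "T j ` {1..h} \<subseteq> {1..m}" "inj_on (T j) {1..h}"
      "\<forall>k\<in>{1..h}. f j (T j h) \<le> f j (T j k)" "\<forall>a\<in>{1..m} - T j ` {1..h}. f j a \<le> f j (T j h)"
      using T j hin by auto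
    show "e j \<le> v j h + \<beta> * (\<Sum>k\<in>{1..h}. v j k - v j h)"
      unfolding e_def v_def using e_bound[of "{1..m}" p \<beta> "T j" h "f j"] p psum Tj by simp
  qed
  have "P^h = (\<Prod>j\<in>{1..h}. e j ^ h)" unfolding P_def by (simp add: prod_power_distrib)
  also have "\<dots> \<le> (\<Prod>j\<in>{1..h}. \<Prod>k\<in>{1..h}. v j k)"
    using row e01 by (intro prod_mono) auto
  also have "\<dots> = (\<Prod>s\<in>{0..<h}. \<Prod>j\<in>{1..h}. v j (rk h s j))" by (rule prod_shift[OF h1])
  finally have Pv: "P^h \<le> (\<Prod>s\<in>{0..<h}. \<Prod>j\<in>{1..h}. v j (rk h s j))" .
  have "\<exists>s\<in>{0..<h}. (\<Prod>j\<in>{1..h}. v j (rk h s j)) > \<epsilon>"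
  proof (rule ccontr)
    assume "\<not> ?thesis"
    then have le: "\<forall>s\<in>{0..<h}. (\<Prod>j\<in>{1..h}. v j (rk h s j)) \<le> \<epsilon>" by auto
    have "(\<Prod>s\<in>{0..<h}. \<Prod>j\<in>{1..h}. v j (rk h s j)) \<le> (\<Prod>s\<in>{0..<h}. \<epsilon>)"
    proof (intro prod_mono conjI)
      fix s assume "s \<in> {0..<h}"
      then show "(\<Prod>j\<in>{1..h}. v j (rk h s j)) \<le> \<epsilon>" using le by auto
      show "0 \<le> (\<Prod>j\<in>{1..h}. v j (rk h s j))"
        using v01 rk_range[OF h1] by (intro prod_nonneg) auto
    qed
    also have "\<dots> = \<epsilon>^h" by simp
    finally have "P^h \<le> \<epsilon>^h" using Pv by simp
    moreover have "\<epsilon>^h < P^h" using Pgt epspos h1 by (intro power_strict_mono) auto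
    ultimately show False by simp
  qed
  then obtain s where s: "s \<in> {0..<h}" "(\<Prod>j\<in>{1..h}. v j (rk h s j)) > \<epsilon>" by blast
  have "\<exists>a. inj_on a {1..h} \<and> (\<forall>j\<in>{1..h}. a j \<in> T j ` {1..rk h s j})"
  proof (rule greedy)
    show "\<forall>j\<in>{1..h}. inj_on (T j) {1..h}" using Tinj by blast
    show "inj_on (rk h s) {1..h}" by (rule rk_inj_j[OF h1])
    show "rk h s ` {1..h} \<subseteq> {1..h}" using rk_range[OF h1] by blast
  qed
  then obtain a where ainj: "inj_on a {1..h}" and aT: "\<forall>j\<in>{1..h}. a j \<in> T j ` {1..rk h s j}" by blast
  have ak: "\<exists>k\<in>{1..h}. k \<le> rk h s j \<and> a j = T j k" if "j \<in> {1..h}" for j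
  proof -
    have "a j \<in> T j ` {1..rk h s j}" using aT that by blast
    then obtain k where k: "k \<in> {1..rk h s j}" "a j = T j k" by (rule imageE) simp
    have "rk h s j \<in> {1..h}" by (rule rk_range[OF h1])
    then have "k \<in> {1..h}" "k \<le> rk h s j" using k(1) by auto
    then show ?thesis using k(2) by blast
  qed
  show ?thesis
  proof (intro exI[of _ a] conjI ballI)
    fix j assume j: "j \<in> {1..h}"
    then obtain k where "k \<in> {1..h}" "a j = T j k" using ak by blast
    then show "a j \<in> {1..m}" using Tm j by simp
  next
    show "inj_on a {1..h}" by (rule ainj)
  next
    have "(\<Prod>j\<in>{1..h}. v j (rk h s j)) \<le> (\<Prod>j\<in>{1..h}. f j (a j))"
    proof (intro prod_mono conjI)
      fix j assume j: "j \<in> {1..h}"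
      have rj: "rk h s j \<in> {1..h}" by (rule rk_range[OF h1])
      show "0 \<le> v j (rk h s j)" using v01 j rj by auto
      obtain k where k: "k \<in> {1..h}" "k \<le> rk h s j" "a j = T j k" using ak j by blast
      then show "v j (rk h s j) \<le> f j (a j)" using Tmono[OF j k(1) rj k(2)] by (simp add: v_def)
    qed
    then show "(\<Prod>j\<in>{1..h}. f j (a j)) > \<epsilon>" using s by simp
  qed
qed

lemma mem_cube: "x \<in> cube n m \<longleftrightarrow> (\<forall>i\<in>{1..n}. x i \<in> {1..m}) \<and> (\<forall>i. i \<notin> {1..n} \<longrightarrow> x i = undefined)"
  unfolding cube_def by (auto simp: PiE_iff extensional_def)

lemma finite_cube: "finite (cube n m)"
  unfolding cube_def by (intro finite_PiE) auto

lemma upd_in_cube: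
  assumes "g \<in> cube n m" "a \<in> {1..m}"
  shows "g(Suc n := a) \<in> cube (Suc n) m"
  using assms unfolding mem_cube by auto

lemma res_in_cube:
  assumes "x \<in> cube (Suc n) m"
  shows "x(Suc n := undefined) \<in> cube n m"
  using assms unfolding mem_cube by auto

lemma cube_last: "x \<in> cube (Suc n) m \<Longrightarrow> x (Suc n) \<in> {1..m}"
  unfolding mem_cube by auto

lemma cube_undef: "g \<in> cube n m \<Longrightarrow> g (Suc n) = undefined"
  unfolding mem_cube by auto

lemma upd_inj:
  assumes "g1 \<in> cube n m" "g2 \<in> cube n m" "g1(Suc n := a) = g2(Suc n := a)"
  shows "g1 = g2"
proof
  fix i show "g1 i = g2 i"
  proof (cases "i = Suc n")
    case True then show ?thesis using assms cube_undef by metis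
  next
    case False then show ?thesis using assms(3) by (metis fun_upd_other)
  qed
qed

lemma pm_Suc:
  assumes FS: "F \<subseteq> cube (Suc n) m"
  shows "prod_measure (Suc n) \<nu> F = (\<Sum>a\<in>{1..m}. \<nu> (Suc n) a * prod_measure n \<nu> {g \<in> cube n m. g(Suc n := a) \<in> F})"
proof -
  define G where "G x = (\<Prod>i\<in>{1..Suc n}. \<nu> i (x i))" for x :: "nat \<Rightarrow> nat"
  have finF: "finite F" using FS finite_cube finite_subset by blast
  have "prod_measure (Suc n) \<nu> F = (\<Sum>x\<in>F. G x)" by (simp add: prod_measure_def G_def)
  also have "\<dots> = (\<Sum>a\<in>{1..m}. \<Sum>x\<in>{x\<in>F. x (Suc n) = a}. G x)"
  proof (rule sum.group[symmetric])
    show "finite F" by (rule finF)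
    show "finite {1..m}" by simp
    show "(\<lambda>x. x (Suc n)) ` F \<subseteq> {1..m}" using FS cube_last by blast
  qed
  also have "\<dots> = (\<Sum>a\<in>{1..m}. \<nu> (Suc n) a * prod_measure n \<nu> {g \<in> cube n m. g(Suc n := a) \<in> F})"
  proof (rule sum.cong[OF refl])
    fix a assume a: "a \<in> {1..m}"
    define S where "S = {g \<in> cube n m. g(Suc n := a) \<in> F}"
    have img: "{x\<in>F. x (Suc n) = a} = (\<lambda>g. g(Suc n := a)) ` S"
    proof
      show "{x\<in>F. x (Suc n) = a} \<subseteq> (\<lambda>g. g(Suc n := a)) ` S"
      proof
        fix x assume x: "x \<in> {x\<in>F. x (Suc n) = a}"
        then have xc: "x \<in> cube (Suc n) m" using FS by blast
        have "x = (x(Suc n := undefined))(Suc n := a)" using x by auto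
        moreover have "x(Suc n := undefined) \<in> S"
          unfolding S_def using res_in_cube[OF xc] x calculation by auto
        ultimately show "x \<in> (\<lambda>g. g(Suc n := a)) ` S" by blast
      qed
      show "(\<lambda>g. g(Suc n := a)) ` S \<subseteq> {x\<in>F. x (Suc n) = a}" unfolding S_def by auto
    qed
    have inj: "inj_on (\<lambda>g. g(Suc n := a)) S"
      by (rule inj_onI) (auto simp: S_def intro: upd_inj)
    have "(\<Sum>x\<in>{x\<in>F. x (Suc n) = a}. G x) = (\<Sum>g\<in>S. G (g(Suc n := a)))"
      unfolding img using inj by (simp add: sum.reindex)
    also have "\<dots> = (\<Sum>g\<in>S. \<nu> (Suc n) a * (\<Prod>i\<in>{1..n}. \<nu> i (g i)))"
    proof (rule sum.cong[OF refl])
      fix g assume "g \<in> S"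
      have "G (g(Suc n := a)) = \<nu> (Suc n) a * (\<Prod>i\<in>{1..n}. \<nu> i ((g(Suc n := a)) i))"
        unfolding G_def by (simp add: atLeastAtMostSuc_conv)
      also have "(\<Prod>i\<in>{1..n}. \<nu> i ((g(Suc n := a)) i)) = (\<Prod>i\<in>{1..n}. \<nu> i (g i))"
        by (rule prod.cong) auto
      finally show "G (g(Suc n := a)) = \<nu> (Suc n) a * (\<Prod>i\<in>{1..n}. \<nu> i (g i))" .
    qed
    also have "\<dots> = \<nu> (Suc n) a * prod_measure n \<nu> S"
      by (simp add: prod_measure_def sum_distrib_left)
    finally show "(\<Sum>x\<in>{x\<in>F. x (Suc n) = a}. G x) = \<nu> (Suc n) a * prod_measure n \<nu> {g \<in> cube n m. g(Suc n := a) \<in> F}"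
      by (simp add: S_def)
  qed
  finally show ?thesis .
qed

lemma pp_Suc: "product_prob (Suc n) m \<nu> \<Longrightarrow> product_prob n m \<nu>"
  unfolding product_prob_def by auto

lemma bal_Suc: "balanced (Suc n) m \<nu> b \<Longrightarrow> balanced n m \<nu> b"
  unfolding balanced_def by auto

lemma cube0: "cube 0 m = {\<lambda>_. undefined}"
  unfolding cube_def by simp

lemma pm_cube: "product_prob n m \<nu> \<Longrightarrow> prod_measure n \<nu> (cube n m) = 1"
proof (induction n)
  case 0
  then show ?case by (simp add: cube0 prod_measure_def)
next
  case (Suc n)
  have IH: "prod_measure n \<nu> (cube n m) = 1" using Suc pp_Suc by blast
  have "prod_measure (Suc n) \<nu> (cube (Suc n) m)
      = (\<Sum>a\<in>{1..m}. \<nu> (Suc n) a * prod_measure n \<nu> {g \<in> cube n m. g(Suc n := a) \<in> cube (Suc n) m})"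
    by (rule pm_Suc) simp
  also have "\<dots> = (\<Sum>a\<in>{1..m}. \<nu> (Suc n) a)"
  proof (rule sum.cong[OF refl])
    fix a assume a: "a \<in> {1..m}"
    have "{g \<in> cube n m. g(Suc n := a) \<in> cube (Suc n) m} = cube n m"
      using upd_in_cube[OF _ a] by blast
    then show "\<nu> (Suc n) a * prod_measure n \<nu> {g \<in> cube n m. g(Suc n := a) \<in> cube (Suc n) m} = \<nu> (Suc n) a"
      using IH by simp
  qed
  also have "\<dots> = 1" using Suc.prems unfolding product_prob_def by auto
  finally show ?case .
qed

lemma pm_nonneg_term:
  assumes "product_prob n m \<nu>" "x \<in> cube n m"
  shows "0 \<le> (\<Prod>i\<in>{1..n}. \<nu> i (x i))"
proof (intro prod_nonneg)
  fix i assume i: "i \<in> {1..n}"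
  then have "x i \<in> {1..m}" using assms(2) unfolding mem_cube by auto
  then show "0 \<le> \<nu> i (x i)" using assms(1) i unfolding product_prob_def by auto
qed

lemma pm_mono:
  assumes "product_prob n m \<nu>" "F \<subseteq> G" "G \<subseteq> cube n m"
  shows "prod_measure n \<nu> F \<le> prod_measure n \<nu> G"
  unfolding prod_measure_def
proof (rule sum_mono2)
  show "finite G" using assms finite_cube finite_subset by blast
  show "F \<subseteq> G" by (rule assms(2))
  fix x assume "x \<in> G - F"
  then show "0 \<le> (\<Prod>i\<in>{1..n}. \<nu> i (x i))" using pm_nonneg_term[OF assms(1)] assms(3) by blast
qed

lemma pm_nonneg:
  assumes "product_prob n m \<nu>" "F \<subseteq> cube n m"
  shows "0 \<le> prod_measure n \<nu> F"
  unfolding prod_measure_def using pm_nonneg_term[OF assms(1)] assms(2) by (intro sum_nonneg) blast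

lemma main_ind:
  fixes h m :: nat and b :: real and \<nu> :: "nat \<Rightarrow> nat \<Rightarrow> real"
  assumes h1: "h \<ge> 1" and bpos: "b > 0" and mhb: "real m > real h * b"
  shows "product_prob n m \<nu> \<Longrightarrow> balanced n m \<nu> b \<Longrightarrow> (\<forall>j\<in>{1..h}. F j \<subseteq> cube n m) \<Longrightarrow>
     (\<Prod>j\<in>{1..h}. prod_measure n \<nu> (F j)) > 2^h * b / (real m - real h * b) \<Longrightarrow>
     \<exists>x. (\<forall>j\<in>{1..h}. x j \<in> F j) \<and> (\<forall>j\<in>{1..h}. \<forall>j'\<in>{1..h}. j \<noteq> j' \<longrightarrow> \<not> (\<exists>i\<in>{1..n}. x j i = x j' i))"
proof (induction n arbitrary: F)
  case 0
  have den: "real m - real h * b > 0" using mhb by simp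
  have epos: "2^h * b / (real m - real h * b) > 0" using den bpos by simp
  have ne: "F j \<noteq> {}" if j: "j \<in> {1..h}" for j
  proof
    assume E: "F j = {}"
    then have "prod_measure 0 \<nu> (F j) = 0" by (simp add: prod_measure_def)
    then have Z: "(\<Prod>j\<in>{1..h}. prod_measure 0 \<nu> (F j)) = 0" using j by (intro prod_zero) auto
    show False using "0.prems"(4) epos Z by linarith
  qed
  have "(\<lambda>_. undefined) \<in> F j" if j: "j \<in> {1..h}" for j
    using ne[OF j] "0.prems"(3) j cube0 by fastforce
  then show ?case by (intro exI[of _ "\<lambda>_ _. undefined"]) auto
next
  case (Suc n F)
  have pp: "product_prob n m \<nu>" using Suc.prems(1) by (rule pp_Suc)
  have bal: "balanced n m \<nu> b" using Suc.prems(2) by (rule bal_Suc)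
  have hbpos: "real h * b > 0" using h1 bpos by simp
  have mpos: "real m > 0" using mhb hbpos by linarith
  define \<beta> where "\<beta> = b / real m"
  define \<epsilon> where "\<epsilon> = 2^h * b / (real m - real h * b)"
  have bepos: "\<beta> > 0" using bpos mpos by (simp add: \<beta>_def)
  have hbeta: "real h * \<beta> < 1" using mhb mpos by (simp add: \<beta>_def field_simps)
  have epsq: "\<epsilon> = 2^h * \<beta> / (1 - real h * \<beta>)"
    unfolding \<epsilon>_def \<beta>_def using mpos mhb by (simp add: field_simps)
  define S where "S j a = {g \<in> cube n m. g(Suc n := a) \<in> F j}" for j a
  define f where "f j a = prod_measure n \<nu> (S j a)" for j a
  have Ssub: "S j a \<subseteq> cube n m" for j a by (auto simp: S_def)
  have f01: "\<forall>j\<in>{1..h}. \<forall>a\<in>{1..m}. 0 \<le> f j a \<and> f j a \<le> 1"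
  proof (intro ballI conjI)
    fix j a
    show "0 \<le> f j a" unfolding f_def using pm_nonneg[OF pp Ssub] .
    have "f j a \<le> prod_measure n \<nu> (cube n m)" unfolding f_def by (rule pm_mono[OF pp Ssub]) simp
    then show "f j a \<le> 1" using pm_cube[OF pp] by simp
  qed
  have p: "\<forall>a\<in>{1..m}. 0 \<le> \<nu> (Suc n) a \<and> \<nu> (Suc n) a \<le> \<beta>"
    using Suc.prems(1,2) unfolding product_prob_def balanced_def \<beta>_def by auto
  have psum: "(\<Sum>a\<in>{1..m}. \<nu> (Suc n) a) = 1"
    using Suc.prems(1) unfolding product_prob_def by auto
  have "(\<Prod>j\<in>{1..h}. \<Sum>a\<in>{1..m}. \<nu> (Suc n) a * f j a) = (\<Prod>j\<in>{1..h}. prod_measure (Suc n) \<nu> (F j))"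
  proof (rule prod.cong[OF refl])
    fix j assume "j \<in> {1..h}"
    then have "F j \<subseteq> cube (Suc n) m" using Suc.prems(3) by blast
    then show "(\<Sum>a\<in>{1..m}. \<nu> (Suc n) a * f j a) = prod_measure (Suc n) \<nu> (F j)"
      by (simp add: pm_Suc f_def S_def)
  qed
  then have Pass: "(\<Prod>j\<in>{1..h}. \<Sum>a\<in>{1..m}. \<nu> (Suc n) a * f j a) > \<epsilon>"
    using Suc.prems(4) by (simp add: \<epsilon>_def)
  obtain a where arange: "\<forall>j\<in>{1..h}. a j \<in> {1..m}" and ainj: "inj_on a {1..h}"
    and aprod: "(\<Prod>j\<in>{1..h}. f j (a j)) > \<epsilon>"
    using one_dim[OF h1 bepos hbeta p psum f01 epsq Pass] by blast
  have "\<exists>x. (\<forall>j\<in>{1..h}. x j \<in> S j (a j)) \<and> (\<forall>j\<in>{1..h}. \<forall>j'\<in>{1..h}. j \<noteq> j' \<longrightarrow> \<not> (\<exists>i\<in>{1..n}. x j i = x j' i))"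
  proof (rule Suc.IH[OF pp bal])
    show "\<forall>j\<in>{1..h}. S j (a j) \<subseteq> cube n m" using Ssub by blast
    show "2^h * b / (real m - real h * b) < (\<Prod>j\<in>{1..h}. prod_measure n \<nu> (S j (a j)))"
      using aprod by (simp add: f_def \<epsilon>_def)
  qed
  then obtain x' where x'S: "\<forall>j\<in>{1..h}. x' j \<in> S j (a j)"
    and x'd: "\<forall>j\<in>{1..h}. \<forall>j'\<in>{1..h}. j \<noteq> j' \<longrightarrow> \<not> (\<exists>i\<in>{1..n}. x' j i = x' j' i)" by blast
  define x where "x j = (x' j)(Suc n := a j)" for j
  show ?case
  proof (intro exI[of _ x] conjI ballI impI)
    fix j assume "j \<in> {1..h}"
    then show "x j \<in> F j" using x'S by (simp add: x_def S_def)
  next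
    fix j j' assume j: "j \<in> {1..h}" "j' \<in> {1..h}" "j \<noteq> j'"
    show "\<not> (\<exists>i\<in>{1..Suc n}. x j i = x j' i)"
    proof
      assume "\<exists>i\<in>{1..Suc n}. x j i = x j' i"
      then obtain i where i: "i \<in> {1..Suc n}" "x j i = x j' i" by blast
      show False
      proof (cases "i = Suc n")
        case True
        then have "a j = a j'" using i by (simp add: x_def)
        then show False using ainj j by (meson inj_onD)
      next
        case False
        then have "i \<in> {1..n}" "x' j i = x' j' i" using i by (auto simp: x_def)
        then show False using x'd j by blast
      qed
    qed
  qed
qed

theorem lemma8p3:
  fixes h n m :: nat and b :: real
    and nu :: "nat \<Rightarrow> nat \<Rightarrow> real"
    and F :: "nat \<Rightarrow> (nat \<Rightarrow> nat) set"
  assumes "b > 0"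
    and "real m > real h * b"
    and "product_prob n m nu"
    and "balanced n m nu b"
    and "\<forall>j\<in>{1..h}. F j \<subseteq> cube n m"
    and "(\<Prod>j\<in>{1..h}. prod_measure n nu (F j)) > 2 ^ h * b / (real m - real h * b)"
  shows "\<exists>x :: nat \<Rightarrow> nat \<Rightarrow> nat.
           (\<forall>j\<in>{1..h}. x j \<in> F j) \<and>
           (\<forall>j\<in>{1..h}. \<forall>j'\<in>{1..h}. j \<noteq> j' \<longrightarrow>
              \<not> (\<exists>i\<in>{1..n}. x j i = x j' i))"
proof (cases "h = 0")
  case True
  then show ?thesis by auto
next
  case False
  then have "h \<ge> 1" by simp
  then show ?thesis using main_ind[of h b m n nu F] assms by blast
qed

end
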